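(* Let $G$ be a directed graph with distinct vertices $s,t$. An augmented $s$-$t$ path graph of $G$ has the same set of minimum $s$-$t$ cuts as $G$.
   Context: An $s$-$t$ cut of a directed graph is a set of edges whose removal leaves no directed $s$-$t$ path; a minimum $s$-$t$ cut is one of minimum cardinality $\lambda(G)$. An augmented $s$-$t$ path graph of $G$ is constructed as follows: take a collection $\mathcal P$ of $\lambda(G)$ pairwise edge-disjoint directed $s$-$t$ paths of $G$ and let $H$ be the graph formed by the union of these paths (its vertex set $V(H)$ is covered by $\mathcal P$, and its edges are the path edges); then add to $H$ a (non-path) edge $(u,v)$ for any two vertices $u,v\in V(H)$ such that $v$ is reachable from $u$ in $G$ by a directed path all of whose internal vertices lie in $V(G)\setminus V(H)$ (in particular, whenever $(u,v)$ is an edge of $G$). *)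

theory Defs
  imports "Graph_Theory.Graph_Theory"
begin

text \<open>Directed (multi)graphs are pre_digraph records: arcs are abstract, so parallel
arcs are allowed.  Paths are the library's arc paths (apath: no repeated vertex).\<close>

definition del_arcs :: "('a,'b) pre_digraph \<Rightarrow> 'b set \<Rightarrow> ('a,'b) pre_digraph" where
  "del_arcs G C = G\<lparr>arcs := arcs G - C\<rparr>"

definition st_cut :: "('a,'b) pre_digraph \<Rightarrow> 'a \<Rightarrow> 'a \<Rightarrow> 'b set \<Rightarrow> bool" where
  "st_cut G s t C \<longleftrightarrow> C \<subseteq> arcs G \<and> \<not> (\<exists>p. pre_digraph.apath (del_arcs G C) s p t)"

definition min_st_cut :: "('a,'b) pre_digraph \<Rightarrow> 'a \<Rightarrow> 'a \<Rightarrow> 'b set \<Rightarrow> bool" where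
  "min_st_cut G s t C \<longleftrightarrow> st_cut G s t C \<and> finite C \<and>
     (\<forall>C'. st_cut G s t C' \<and> finite C' \<longrightarrow> card C \<le> card C')"

definition st_lambda :: "('a,'b) pre_digraph \<Rightarrow> 'a \<Rightarrow> 'a \<Rightarrow> nat" where
  "st_lambda G s t = Min {card C | C. st_cut G s t C \<and> finite C}"

definition path_verts :: "('a,'b) pre_digraph \<Rightarrow> 'a \<Rightarrow> 'b list set \<Rightarrow> 'a set" where
  "path_verts G s P = (\<Union>p\<in>P. set (pre_digraph.awalk_verts G s p))"

definition path_arcs :: "'b list set \<Rightarrow> 'b set" where
  "path_arcs P = (\<Union>p\<in>P. set p)"

text \<open>The non-path edges: pairs (u,v) of vertices of H such that v is reachable from u
in G by a directed path all of whose internal vertices lie outside V(H) and which does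
not use path arcs (so a path arc is not duplicated; any other arc of G between vertices
of H, including parallel copies of path arcs, does give a non-path edge).\<close>
definition nonpath_edges :: "('a,'b) pre_digraph \<Rightarrow> 'a \<Rightarrow> 'b list set \<Rightarrow> ('a \<times> 'a) set" where
  "nonpath_edges G s P = {(u,v). u \<in> path_verts G s P \<and> v \<in> path_verts G s P \<and>
     (\<exists>q. pre_digraph.apath G u q v \<and> q \<noteq> [] \<and> set q \<inter> path_arcs P = {} \<and>
          set (butlast (tl (pre_digraph.awalk_verts G u q))) \<inter> path_verts G s P = {})}"

definition aug_path_graph :: "('a,'b) pre_digraph \<Rightarrow> 'a \<Rightarrow> 'b list set \<Rightarrow> ('a, 'b + ('a \<times> 'a)) pre_digraph" where
  "aug_path_graph G s P = \<lparr> verts = path_verts G s P,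
     arcs = Inl ` path_arcs P \<union> Inr ` nonpath_edges G s P,
     tail = case_sum (tail G) fst,
     head = case_sum (head G) snd \<rparr>"

definition edge_disjoint_st_paths :: "('a,'b) pre_digraph \<Rightarrow> 'a \<Rightarrow> 'a \<Rightarrow> 'b list set \<Rightarrow> bool" where
  "edge_disjoint_st_paths G s t P \<longleftrightarrow> finite P \<and> card P = st_lambda G s t \<and>
     (\<forall>p\<in>P. pre_digraph.apath G s p t) \<and>
     (\<forall>p\<in>P. \<forall>q\<in>P. p \<noteq> q \<longrightarrow> set p \<inter> set q = {})"

end

theory Submission imports Defs begin

lemma cas_cong_graph:
  assumes "tail H = tail G" "head H = head G"
  shows "pre_digraph.cas H u p v = pre_digraph.cas G u p v"
  using assms by (induct p arbitrary: u) (auto simp: pre_digraph.cas.simps)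

lemma awalk_verts_cong_graph:
  assumes "tail H = tail G" "head H = head G"
  shows "pre_digraph.awalk_verts H u p = pre_digraph.awalk_verts G u p"
  using assms by (induct p arbitrary: u) (auto simp: pre_digraph.awalk_verts.simps)

lemma del_arcs_simps[simp]:
  "verts (del_arcs G C) = verts G" "arcs (del_arcs G C) = arcs G - C"
  "tail (del_arcs G C) = tail G" "head (del_arcs G C) = head G"
  by (auto simp: del_arcs_def)

lemma awalk_del_arcs:
  "pre_digraph.awalk (del_arcs G C) u p v \<longleftrightarrow> pre_digraph.awalk G u p v \<and> set p \<inter> C = {}"
  by (auto simp: pre_digraph.awalk_def cas_cong_graph[of "del_arcs G C" G])

lemma apath_del_arcs:
  "pre_digraph.apath (del_arcs G C) u p v \<longleftrightarrow> pre_digraph.apath G u p v \<and> set p \<inter> C = {}"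
  by (auto simp: pre_digraph.apath_def awalk_del_arcs awalk_verts_cong_graph[of "del_arcs G C" G])

lemma wf_del_arcs: "wf_digraph G \<Longrightarrow> wf_digraph (del_arcs G C)"
  by (auto simp: wf_digraph_def)

lemma hitting:
  fixes S :: "'p \<Rightarrow> 'e set"
  assumes "finite P" "finite C"
    and "\<And>p q. p \<in> P \<Longrightarrow> q \<in> P \<Longrightarrow> p \<noteq> q \<Longrightarrow> S p \<inter> S q = {}"
    and "\<And>p. p \<in> P \<Longrightarrow> S p \<inter> C \<noteq> {}"
  shows "card P \<le> card C \<and> (card C \<le> card P \<longrightarrow> C \<subseteq> \<Union>(S ` P))"
proof -
  define f where "f p = (SOME e. e \<in> S p \<inter> C)" for p
  have f: "f p \<in> S p \<inter> C" if "p \<in> P" for p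
  proof -
    have "\<exists>e. e \<in> S p \<inter> C" using assms(4)[OF that] by blast
    then show ?thesis unfolding f_def by (rule someI_ex)
  qed
  have inj: "inj_on f P"
  proof (rule inj_onI)
    fix p q assume pq: "p \<in> P" "q \<in> P" "f p = f q"
    show "p = q"
    proof (rule ccontr)
      assume "p \<noteq> q"
      then have "S p \<inter> S q = {}" using assms(3) pq(1,2) by simp
      moreover have "f p \<in> S p \<inter> S q" using f[OF pq(1)] f[OF pq(2)] pq(3) by simp
      ultimately show False by simp
    qed
  qed
  have sub: "f ` P \<subseteq> C" using f by blast
  have c: "card (f ` P) = card P" using card_image[OF inj] .
  have 1: "card P \<le> card C" using card_mono[OF assms(2) sub] c by simp
  moreover have "C \<subseteq> \<Union>(S ` P)" if "card C \<le> card P"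
  proof -
    have "f ` P = C" using card_subset_eq[OF assms(2) sub] c that 1 by simp
    then show ?thesis using f by blast
  qed
  ultimately show ?thesis by blast
qed

lemma awalk_ConsI_gen:
  assumes "pre_digraph.awalk K (head K a) ps w" "a \<in> arcs K" "tail K a = u" "u \<in> verts K"
  shows "pre_digraph.awalk K u (a # ps) w"
  using assms by (auto simp: pre_digraph.awalk_def pre_digraph.cas.simps)

context
  fixes G :: "('a,'b) pre_digraph" and s t :: 'a and P :: "'b list set"
  assumes fin: "fin_digraph G"
    and sV: "s \<in> verts G" and tV: "t \<in> verts G" and st: "s \<noteq> t"
    and ed: "edge_disjoint_st_paths G s t P"
begin

interpretation fin_digraph G by (rule fin)

abbreviation "HH \<equiv> aug_path_graph G s P"
abbreviation "VV \<equiv> path_verts G s P"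
abbreviation "AA \<equiv> path_arcs P"

lemma Pfin: "finite P" and Pcard: "card P = st_lambda G s t"
  and Papath: "p \<in> P \<Longrightarrow> apath s p t"
  and Pdisj: "p \<in> P \<Longrightarrow> q \<in> P \<Longrightarrow> p \<noteq> q \<Longrightarrow> set p \<inter> set q = {}"
  using ed by (auto simp: edge_disjoint_st_paths_def)

lemma H_simps[simp]: "verts HH = VV" "arcs HH = Inl ` AA \<union> Inr ` nonpath_edges G s P"
  "tail HH = case_sum (tail G) fst" "head HH = case_sum (head G) snd"
  by (auto simp: aug_path_graph_def)

lemma A_tail: "e \<in> AA \<Longrightarrow> tail G e \<in> VV"
proof -
  assume "e \<in> AA"
  then obtain p where p: "p \<in> P" "e \<in> set p" by (auto simp: path_arcs_def)
  then have "tail G e \<in> set (awalk_verts s p)" by (auto simp: awalk_verts_conv)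
  then show ?thesis using p by (auto simp: path_verts_def)
qed

lemma A_head: "e \<in> AA \<Longrightarrow> head G e \<in> VV"
proof -
  assume "e \<in> AA"
  then obtain p where p: "p \<in> P" "e \<in> set p" by (auto simp: path_arcs_def)
  then have "cas s p t" using Papath by (auto simp: apath_def awalk_def)
  then have "head G e \<in> set (awalk_verts s p)" using p by (auto simp: awalk_verts_conv')
  then show ?thesis using p by (auto simp: path_verts_def)
qed

lemma A_arcs: "AA \<subseteq> arcs G"
  using Papath by (auto simp: path_arcs_def apath_def awalk_def)

lemma wf_H: "wf_digraph HH"
  unfolding wf_digraph_def using A_tail A_head
  by (auto simp: nonpath_edges_def)

lemma cas_map_Inl: "pre_digraph.cas HH u (map Inl p) v = cas u p v"
  by (induct p arbitrary: u) (auto simp: pre_digraph.cas.simps)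

lemma verts_map_Inl: "pre_digraph.awalk_verts HH u (map Inl p) = awalk_verts u p"
  by (induct p arbitrary: u) (auto simp: pre_digraph.awalk_verts.simps)

lemma apath_H_Inl: "p \<in> P \<Longrightarrow> pre_digraph.apath HH s (map Inl p) t"
proof -
  assume p: "p \<in> P"
  have a: "apath s p t" using Papath[OF p] .
  have "s \<in> set (awalk_verts s p)" using hd_in_awalk_verts(2)[OF a] .
  then have "s \<in> VV" using p by (auto simp: path_verts_def)
  moreover have "set p \<subseteq> AA" using p by (auto simp: path_arcs_def)
  ultimately show ?thesis using a
    by (auto simp: pre_digraph.apath_def pre_digraph.awalk_def cas_map_Inl verts_map_Inl
        apath_def awalk_def)
qed

lemma cut_hits_G:
  assumes c: "st_cut G s t C" and p: "p \<in> P" shows "set p \<inter> C \<noteq> {}"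
proof
  assume "set p \<inter> C = {}"
  then have "pre_digraph.apath (del_arcs G C) s p t" using Papath[OF p] by (simp add: apath_del_arcs)
  then show False using c unfolding st_cut_def by blast
qed

lemma cut_hits_H:
  assumes c: "st_cut HH s t C" and p: "p \<in> P" shows "Inl ` set p \<inter> C \<noteq> {}"
proof
  assume "Inl ` set p \<inter> C = {}"
  then have "set (map Inl p) \<inter> C = {}" by simp
  then have "pre_digraph.apath (del_arcs HH C) s (map Inl p) t"
    using apath_H_Inl[OF p] by (simp add: apath_del_arcs)
  then show False using c unfolding st_cut_def by blast
qed

lemma lam_facts: "(\<forall>C. st_cut G s t C \<and> finite C \<longrightarrow> card P \<le> card C) \<and>
   (\<exists>C0. st_cut G s t C0 \<and> finite C0 \<and> card C0 = card P)"
proof -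
  define K where "K = {card C | C. st_cut G s t C \<and> finite C}"
  have "K \<subseteq> card ` Pow (arcs G)"
  proof
    fix k assume "k \<in> K"
    then obtain C where "k = card C" "st_cut G s t C" unfolding K_def by blast
    then have "C \<in> Pow (arcs G)" "k = card C" unfolding st_cut_def by simp_all
    then show "k \<in> card ` Pow (arcs G)" by (rule rev_image_eqI)
  qed
  then have fK: "finite K" by (rule finite_subset) simp
  have "st_cut G s t (arcs G)"
  proof -
    have "False" if pp: "apath s p t" "set p \<inter> arcs G = {}" for p
    proof -
      have "set p \<subseteq> arcs G" using pp(1) unfolding apath_def awalk_def by simp
      then have "set p \<inter> arcs G = set p" by (rule Int_absorb2)
      then have "set p = {}" using pp(2) by simp
      then have "p = []" by simp
      then show False using pp(1) st by (simp add: apath_Nil_iff)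
    qed
    then show ?thesis unfolding st_cut_def apath_del_arcs by blast
  qed
  then have "card (arcs G) \<in> K" unfolding K_def by auto
  then have ne: "K \<noteq> {}" by blast
  have "Min K \<in> K" using Min_in[OF fK ne] .
  then obtain C0 where C0: "Min K = card C0" "st_cut G s t C0" "finite C0" unfolding K_def by auto
  then have ex: "\<exists>C0. st_cut G s t C0 \<and> finite C0 \<and> card C0 = Min K"
    by (intro exI[of _ C0]) simp
  have le: "\<forall>C. st_cut G s t C \<and> finite C \<longrightarrow> Min K \<le> card C"
  proof (intro allI impI)
    fix C assume "st_cut G s t C \<and> finite C"
    then have "card C \<in> K" unfolding K_def by blast
    then show "Min K \<le> card C" by (rule Min_le[OF fK])
  qed
  have "card P = Min K" using Pcard unfolding st_lambda_def K_def by simp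
  then show ?thesis using ex le by simp
qed

lemma minG_iff: "min_st_cut G s t C \<longleftrightarrow> st_cut G s t C \<and> finite C \<and> card C = card P"
proof
  assume "min_st_cut G s t C"
  then have m: "st_cut G s t C" "finite C" "\<And>C'. st_cut G s t C' \<Longrightarrow> finite C' \<Longrightarrow> card C \<le> card C'"
    unfolding min_st_cut_def by auto
  obtain C0 where C0: "st_cut G s t C0" "finite C0" "card C0 = card P" using lam_facts by blast
  have "card C \<le> card P" using m(3)[OF C0(1,2)] C0(3) by simp
  moreover have "card P \<le> card C" using lam_facts m(1,2) by blast
  ultimately show "st_cut G s t C \<and> finite C \<and> card C = card P" using m(1,2) by simp
next
  assume a: "st_cut G s t C \<and> finite C \<and> card C = card P"
  have "card C \<le> card C'" if "st_cut G s t C' \<and> finite C'" for C'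
    using lam_facts that a by simp
  then show "min_st_cut G s t C"
    using a unfolding min_st_cut_def by blast
qed

lemma walk_back:
  assumes CA: "C \<subseteq> AA"
  shows "pre_digraph.cas HH u ps v \<Longrightarrow> set ps \<subseteq> arcs HH - Inl ` C \<Longrightarrow> u \<in> verts G
    \<Longrightarrow> \<exists>q. awalk u q v \<and> set q \<inter> C = {}"
proof (induct ps arbitrary: u)
  case Nil
  then show ?case by (auto simp: pre_digraph.cas.simps awalk_Nil_iff intro!: exI[of _ "[]"])
next
  case (Cons x ps)
  show ?case
  proof (cases x)
    case (Inl a)
    with Cons.prems have a: "a \<in> AA" "a \<notin> C" "tail G a = u"
      and c: "pre_digraph.cas HH (head G a) ps v" "set ps \<subseteq> arcs HH - Inl ` C"
      by (auto simp: pre_digraph.cas.simps)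
    have aG: "a \<in> arcs G" using a A_arcs by auto
    obtain q where q: "awalk (head G a) q v" "set q \<inter> C = {}"
      using Cons.hyps[OF c] aG by auto
    show ?thesis using q a aG by (intro exI[of _ "a # q"]) (auto simp: awalk_Cons_iff)
  next
    case (Inr yz)
    obtain y z where yz: "yz = (y,z)" by force
    with Inr Cons.prems have e: "(y,z) \<in> nonpath_edges G s P" "y = u"
      and c: "pre_digraph.cas HH z ps v" "set ps \<subseteq> arcs HH - Inl ` C"
      by (auto simp: pre_digraph.cas.simps)
    obtain q0 where q0: "apath y q0 z" "set q0 \<inter> AA = {}"
      using e(1) by (auto simp: nonpath_edges_def)
    have zG: "z \<in> verts G" using q0 by (auto simp: apath_def intro: awalk_last_in_verts)
    obtain q1 where q1: "awalk z q1 v" "set q1 \<inter> C = {}"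
      using Cons.hyps[OF c zG] by auto
    have "awalk u (q0 @ q1) v" using q0 q1 e by (auto simp: apath_def intro: awalk_appendI)
    then show ?thesis using q0 q1 CA by (intro exI[of _ "q0 @ q1"]) auto
  qed
qed

lemma cutH:
  assumes CA: "C \<subseteq> AA" and cut: "st_cut G s t C"
  shows "st_cut HH s t (Inl ` C)"
proof -
  have "False" if "pre_digraph.apath HH s ps t" "set ps \<inter> Inl ` C = {}" for ps
  proof -
    have "pre_digraph.cas HH s ps t" "set ps \<subseteq> arcs HH"
      using that by (auto simp: pre_digraph.apath_def pre_digraph.awalk_def)
    moreover have "set ps \<subseteq> arcs HH - Inl ` C" using that(2) calculation(2) by blast
    ultimately obtain q where q: "awalk s q t" "set q \<inter> C = {}"
      using walk_back[OF CA, of s ps t] sV by blast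
    have w: "pre_digraph.awalk (del_arcs G C) s q t" using q by (simp add: awalk_del_arcs)
    have wf: "wf_digraph (del_arcs G C)" by (rule wf_del_arcs) (rule wf_digraph)
    have "\<exists>p. pre_digraph.apath (del_arcs G C) s p t"
      using wf_digraph.apath_awalk_to_apath[OF wf w] by blast
    then show False using cut by (auto simp: st_cut_def)
  qed
  then show ?thesis using CA by (auto simp: st_cut_def apath_del_arcs)
qed


lemma fwd:
  assumes CA: "C \<subseteq> AA" and tVV: "t \<in> VV"
  shows "apath x (r @ p) t \<Longrightarrow> set (r @ p) \<inter> C = {} \<Longrightarrow> x \<in> VV
    \<Longrightarrow> set r \<inter> AA = {} \<Longrightarrow> set (tl (awalk_verts x r)) \<inter> VV = {}
    \<Longrightarrow> \<exists>ps. pre_digraph.awalk (del_arcs HH (Inl ` C)) x ps t"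
proof (induct p arbitrary: x r)
  case Nil
  show ?case
  proof (cases "r = []")
    case True
    then have "x = t" using Nil.prems(1) by (auto simp: apath_Nil_iff)
    then show ?thesis using tVV
      by (intro exI[of _ "[]"]) (auto simp: pre_digraph.awalk_def pre_digraph.cas.simps)
  next
    case False
    have "cas x r t" using Nil.prems(1) by (auto simp: apath_def awalk_def)
    then have "awlast x r = t" by (rule awlast_if_cas)
    moreover have "awlast x r \<in> set (tl (awalk_verts x r))" using False
      by (auto simp: awalk_verts_conv)
    ultimately show ?thesis using Nil.prems(5) tVV by blast
  qed
next
  case (Cons e p)
  let ?y = "awlast x r"
  let ?z = "head G e"
  have ap: "apath x r ?y" "apath ?y (e # p) t"
    using Cons.prems(1) by (auto simp: apath_append_iff)
  then have e: "e \<in> arcs G" "tail G e = ?y" "apath ?z p t"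
    by (auto simp: apath_Cons_iff)
  have eC: "e \<notin> C" using Cons.prems(2) by auto
  have yr: "r \<noteq> [] \<Longrightarrow> ?y \<in> set (tl (awalk_verts x r))" by (auto simp: awalk_verts_conv)
  have vlast: "r \<noteq> [] \<Longrightarrow> ?y = head G (last r)" by (auto simp: awalk_verts_conv)
  have IH0: "\<exists>ps. pre_digraph.awalk (del_arcs HH (Inl ` C)) ?z ps t" if "?z \<in> VV"
    using Cons.hyps[of ?z "[]"] e(3) Cons.prems(2) that by auto
  have consH: "\<exists>ps. pre_digraph.awalk (del_arcs HH (Inl ` C)) x ps t"
    if aa: "a \<in> arcs HH" "a \<notin> Inl ` C" "tail HH a = x" "head HH a = ?z" "?z \<in> VV" for a
  proof -
    obtain ps where "pre_digraph.awalk (del_arcs HH (Inl ` C)) ?z ps t" using IH0 aa(5) by blast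
    then show ?thesis using aa Cons.prems(3)
      by (intro exI[of _ "a # ps"] awalk_ConsI_gen) auto
  qed
  show ?case
  proof (cases "?z \<in> VV")
    case zV: True
    show ?thesis
    proof (cases "e \<in> AA")
      case True
      have "r = []" using yr e(2) A_tail[OF True] Cons.prems(5) by auto
      then have "tail G e = x" using e(2) by simp
      then show ?thesis using True eC zV by (intro consH[of "Inl e"]) auto
    next
      case False
      have q: "apath x (r @ [e]) ?z"
      proof -
        have "apath x ((r @ [e]) @ p) t" using Cons.prems(1) by simp
        then have "apath x (r @ [e]) (awlast x (r @ [e]))"
          using apath_append_iff[of x "r @ [e]" p t] by blast
        moreover have "awlast x (r @ [e]) = ?z" by (simp add: awalk_verts_conv)
        ultimately show ?thesis by simp
      qed
      have bt: "butlast (tl (awalk_verts x (r @ [e]))) = tl (awalk_verts x r)"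
      proof (cases "r = []")
        case True then show ?thesis by simp
      next
        case False
        then show ?thesis using vlast[OF False] e(2)
          by (cases r) (auto simp: awalk_verts_conv butlast_append)
      qed
      have "(x, ?z) \<in> nonpath_edges G s P"
        unfolding nonpath_edges_def using Cons.prems(3,4,5) zV False q bt
        by (auto intro!: exI[of _ "r @ [e]"])
      then show ?thesis using zV by (intro consH[of "Inr (x, ?z)"]) auto
    qed
  next
    case zV: False
    have eA: "e \<notin> AA" using A_head zV by blast
    have tl2: "set (tl (awalk_verts x (r @ [e]))) \<subseteq> set (tl (awalk_verts x r)) \<union> {?z}"
    proof (cases "r = []")
      case True then show ?thesis by simp
    next
      case False
      then show ?thesis using vlast[OF False] e(2)
        by (cases r) (auto simp: awalk_verts_conv)
    qed
    have "\<exists>ps. pre_digraph.awalk (del_arcs HH (Inl ` C)) x ps t"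
      using Cons.hyps[of x "r @ [e]"] Cons.prems eA zV tl2 by auto
    then show ?thesis .
  qed
qed

lemma cutG:
  assumes CA: "C \<subseteq> AA" and cut: "st_cut HH s t (Inl ` C)" and Pne: "P \<noteq> {}"
  shows "st_cut G s t C"
proof -
  obtain p0 where p0: "p0 \<in> P" using Pne by blast
  have "cas s p0 t" using Papath[OF p0] by (auto simp: apath_def awalk_def)
  then have "last (awalk_verts s p0) = t" by (rule awlast_if_cas)
  then have "t \<in> set (awalk_verts s p0)" by (metis last_in_set awalk_verts_non_Nil)
  then have "s \<in> VV" "t \<in> VV"
    using Papath[OF p0] p0 hd_in_awalk_verts(2)[OF Papath[OF p0]]
    by (auto simp: path_verts_def apath_def awalk_def awlast_if_cas intro!: bexI[of _ p0])
  have "False" if pp: "apath s p t" "set p \<inter> C = {}" for p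
  proof -
    obtain ps where w: "pre_digraph.awalk (del_arcs HH (Inl ` C)) s ps t"
      using fwd[OF CA \<open>t \<in> VV\<close>, of s "[]" p] pp \<open>s \<in> VV\<close> by auto
    have wf: "wf_digraph (del_arcs HH (Inl ` C))" by (rule wf_del_arcs) (rule wf_H)
    have "\<exists>p. pre_digraph.apath (del_arcs HH (Inl ` C)) s p t"
      using wf_digraph.apath_awalk_to_apath[OF wf w] by blast
    then show False using cut by (auto simp: st_cut_def)
  qed
  then show ?thesis using CA A_arcs by (auto simp: st_cut_def apath_del_arcs)
qed

end


theorem claim6:
  fixes G :: "('a,'b) pre_digraph" and s t :: 'a and P :: "'b list set"
  assumes "fin_digraph G"
    and "s \<in> verts G" and "t \<in> verts G" and "s \<noteq> t"
    and "edge_disjoint_st_paths G s t P"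
  shows "{C. min_st_cut (aug_path_graph G s P) s t C} = (\<lambda>C. Inl ` C) ` {C. min_st_cut G s t C}"
proof -
  let ?H = "aug_path_graph G s P"
  have Pfin: "finite P" using Pfin[OF assms] .
  have disjG: "\<And>p q. p \<in> P \<Longrightarrow> q \<in> P \<Longrightarrow> p \<noteq> q \<Longrightarrow> set p \<inter> set q = {}"
    using Pdisj[OF assms] by blast
  have disjH: "\<And>p q. p \<in> P \<Longrightarrow> q \<in> P \<Longrightarrow> p \<noteq> q \<Longrightarrow> Inl ` set p \<inter> Inl ` set q = {}"
    using disjG by blast
  have lowH: "card P \<le> card C''" if "st_cut ?H s t C''" "finite C''" for C''
    using hitting[of P C'' "\<lambda>p. Inl ` set p", OF Pfin that(2) disjH] cut_hits_H[OF assms that(1)]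
    by blast
  have injI: "inj_on (Inl :: 'b \<Rightarrow> 'b + ('a \<times> 'a)) X" for X by (auto intro: inj_onI)
  have fwd_dir: "min_st_cut ?H s t (Inl ` C)" if m: "min_st_cut G s t C" for C
  proof -
    have c: "st_cut G s t C" "finite C" "card C = card P" using m minG_iff[OF assms] by auto
    have "C \<subseteq> \<Union>(set ` P)"
      using hitting[of P C set, OF Pfin c(2) disjG] cut_hits_G[OF assms c(1)] c(3) by auto
    then have CA: "C \<subseteq> path_arcs P" by (simp add: path_arcs_def)
    have cH: "st_cut ?H s t (Inl ` C)" by (rule cutH[OF assms CA c(1)])
    have "card (Inl ` C :: ('b + 'a \<times> 'a) set) = card P" using card_image[OF injI] c(3) by simp
    then show ?thesis using cH c(2) lowH unfolding min_st_cut_def by auto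
  qed
  have bwd: "C' \<in> (\<lambda>C. Inl ` C) ` {C. min_st_cut G s t C}" if m: "min_st_cut ?H s t C'" for C'
  proof -
    have c': "st_cut ?H s t C'" "finite C'" "\<And>C''. st_cut ?H s t C'' \<Longrightarrow> finite C'' \<Longrightarrow> card C' \<le> card C''"
      using m unfolding min_st_cut_def by auto
    obtain C0 where C0: "st_cut G s t C0" "finite C0" "card C0 = card P"
      using lam_facts[OF assms] by blast
    have "min_st_cut ?H s t (Inl ` C0)" using fwd_dir C0 minG_iff[OF assms] by blast
    then have le: "card C' \<le> card P"
      using c'(3)[of "Inl ` C0"] card_image[OF injI, of C0] C0(3) unfolding min_st_cut_def by auto
    have ge: "card P \<le> card C'" using lowH c' by blast
    have "C' \<subseteq> \<Union>((\<lambda>p. Inl ` set p) ` P)"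
      using hitting[of P C' "\<lambda>p. Inl ` set p", OF Pfin c'(2) disjH] cut_hits_H[OF assms c'(1)] le
      by blast
    then have sub: "C' \<subseteq> Inl ` path_arcs P" by (simp add: path_arcs_def image_UN)
    define C where "C = {a. Inl a \<in> C'}"
    have eq: "C' = Inl ` C" using sub unfolding C_def by auto
    have CA: "C \<subseteq> path_arcs P" using sub unfolding C_def by auto
    have finC: "finite C" using c'(2) unfolding C_def
      by (metis (no_types) finite_vimageI injI vimage_def)
    have cardC: "card C = card P" using card_image[OF injI, of C] eq le ge by simp
    have cutC: "st_cut G s t C"
    proof (cases "P = {}")
      case True
      then have "C = {}" "C0 = {}" using cardC finC C0 Pfin by auto
      then show ?thesis using C0 by simp
    next
      case False
      show ?thesis using cutG[OF assms CA _ False] c'(1) eq by simp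
    qed
    have "min_st_cut G s t C" using minG_iff[OF assms] cutC finC cardC by blast
    then show ?thesis using eq by blast
  qed
  show ?thesis using fwd_dir bwd by blast
qed

end
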